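(* Let $0<c<C<\infty$ be fixed. For $i=1,2$ let $l^i,r^i:[0,T]\times\mathbb{R}\to\mathbb{R}$ satisfy Assumption (A) with these constants $c,C$, let $s^i\in C[0,T]$ and $a^i\in\mathbb{R}$ with $l^i(T,a^i)\le0\le r^i(T,a^i)$, and let $(x^i,k^i)$ be the solution of $\mathbb{BSP}_{l^i}^{r^i}(s^i,a^i)$. Then $$\sup_{t\in[0,T]}|k^1_t-k^2_t|\le \frac{2C}{c}|a^1-a^2|+\frac{4C}{c}\sup_{t\in[0,T]}|s^1_t-s^2_t|+\frac{2}{c}\big(\bar L_T\vee\bar R_T\big),$$ where $\bar L_T=\sup_{(t,x)\in[0,T]\times\mathbb{R}}|l^1(t,x)-l^2(t,x)|$ and $\bar R_T=\sup_{(t,x)\in[0,T]\times\mathbb{R}}|r^1(t,x)-r^2(t,x)|$.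
   Context: $C[0,T]$: real continuous functions on $[0,T]$; $BV[0,T]$: functions in $C[0,T]$ starting from $0$ with bounded variation; $I[0,T]$: nondecreasing functions in $C[0,T]$ starting from $0$. Assumption (A) on $l,r:[0,T]\times\mathbb{R}\to\mathbb{R}$ (with constants $0<c<C$): (i) for each $x$, $l(\cdot,x),r(\cdot,x)\in C[0,T]$; (ii) for each $t$, $l(t,\cdot)$, $r(t,\cdot)$ strictly increasing; (iii) $c|x-y|\le|l(t,x)-l(t,y)|\le C|x-y|$ and $c|x-y|\le|r(t,x)-r(t,y)|\le C|x-y|$ for all $t,x,y$; (iv) $\inf_{t,x}(r(t,x)-l(t,x))>0$. A solution of $\mathbb{BSP}_l^r(s,a)$ (for $s\in C[0,T]$, $a\in\mathbb{R}$, $l(T,a)\le0\le r(T,a)$) is a pair $(x,k)\in C[0,T]\times BV[0,T]$ with $x_t=a+s_T-s_t+k_T-k_t$, $l(t,x_t)\le0\le r(t,x_t)$ for all $t$, and $k=k^r-k^l$, $k^r,k^l\in I[0,T]$, $\int_0^T\mathbf 1_{\{l(s,x_s)<0\}}dk^l_s=0$, $\int_0^T\mathbf 1_{\{r(s,x_s)>0\}}dk^r_s=0$; it exists and is unique under Assumption (A). *)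

theory Defs
  imports "HOL-Analysis.Analysis"
begin

text \<open>Functions on [0,T] are represented as total functions real => real; only their
values on {0..T} matter.\<close>

definition bounded_variation_on :: "real \<Rightarrow> (real \<Rightarrow> real) \<Rightarrow> bool" where
  "bounded_variation_on T f \<longleftrightarrow>
     (\<exists>B. \<forall>(n::nat) (p::nat \<Rightarrow> real). p 0 = 0 \<and> p n = T \<and> (\<forall>i<n. p i \<le> p (Suc i)) \<longrightarrow>
        (\<Sum>i<n. \<bar>f (p (Suc i)) - f (p i)\<bar>) \<le> B)"

definition BV :: "real \<Rightarrow> (real \<Rightarrow> real) set" where
  "BV T = {f. continuous_on {0..T} f \<and> f 0 = 0 \<and> bounded_variation_on T f}"

definition Incr :: "real \<Rightarrow> (real \<Rightarrow> real) set" where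
  "Incr T = {f. continuous_on {0..T} f \<and> f 0 = 0 \<and> mono_on {0..T} f}"

definition stieltjes :: "real \<Rightarrow> (real \<Rightarrow> real) \<Rightarrow> real measure" where
  "stieltjes T k = interval_measure (\<lambda>t. k (max 0 (min T t)))"

definition assumptionA ::
  "real \<Rightarrow> real \<Rightarrow> real \<Rightarrow> (real \<Rightarrow> real \<Rightarrow> real) \<Rightarrow> (real \<Rightarrow> real \<Rightarrow> real) \<Rightarrow> bool" where
  "assumptionA T c C l r \<longleftrightarrow>
     (\<forall>x. continuous_on {0..T} (\<lambda>t. l t x) \<and> continuous_on {0..T} (\<lambda>t. r t x)) \<and>
     (\<forall>t\<in>{0..T}. strict_mono (l t) \<and> strict_mono (r t)) \<and>
     (\<forall>t\<in>{0..T}. \<forall>x y.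
        c * \<bar>x - y\<bar> \<le> \<bar>l t x - l t y\<bar> \<and> \<bar>l t x - l t y\<bar> \<le> C * \<bar>x - y\<bar> \<and>
        c * \<bar>x - y\<bar> \<le> \<bar>r t x - r t y\<bar> \<and> \<bar>r t x - r t y\<bar> \<le> C * \<bar>x - y\<bar>) \<and>
     (\<exists>\<delta>>0. \<forall>t\<in>{0..T}. \<forall>x. \<delta> \<le> r t x - l t x)"

definition BSP_solution ::
  "real \<Rightarrow> (real \<Rightarrow> real \<Rightarrow> real) \<Rightarrow> (real \<Rightarrow> real \<Rightarrow> real) \<Rightarrow> (real \<Rightarrow> real) \<Rightarrow> real
    \<Rightarrow> (real \<Rightarrow> real) \<Rightarrow> (real \<Rightarrow> real) \<Rightarrow> bool" where
  "BSP_solution T l r s a x k \<longleftrightarrow>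
     continuous_on {0..T} x \<and> k \<in> BV T \<and>
     (\<forall>t\<in>{0..T}. x t = a + s T - s t + k T - k t) \<and>
     (\<forall>t\<in>{0..T}. l t (x t) \<le> 0 \<and> 0 \<le> r t (x t)) \<and>
     (\<exists>kr kl. kr \<in> Incr T \<and> kl \<in> Incr T \<and> (\<forall>t\<in>{0..T}. k t = kr t - kl t) \<and>
        (\<integral>\<^sup>+ u. indicator {u\<in>{0..T}. l u (x u) < 0} u \<partial>stieltjes T kl) = 0 \<and>
        (\<integral>\<^sup>+ u. indicator {u\<in>{0..T}. r u (x u) > 0} u \<partial>stieltjes T kr) = 0)"

end

theory Submission imports Defs begin

lemma stieltjes_flat:
  assumes T: "0 \<le> T" and kr: "kr \<in> Incr T"
    and I: "(\<integral>\<^sup>+ u. indicator A u \<partial>stieltjes T kr) = 0"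
    and sub: "{a<..b} \<subseteq> A" and ab: "0 \<le> a" "a \<le> b" "b \<le> T"
  shows "kr b = kr a"
proof -
  define F where "F = (\<lambda>t. kr (max 0 (min T t)))"
  have cont: "continuous_on {0..T} kr" and mono: "mono_on {0..T} kr"
    using kr by (auto simp: Incr_def)
  have Fm: "F x \<le> F y" if "x \<le> y" for x y
    unfolding F_def using T that by (intro mono_onD[OF mono]) auto
  have "continuous_on UNIV (\<lambda>t. max 0 (min T t) :: real)"
    by (intro continuous_intros)
  hence Fc: "continuous_on UNIV F"
    unfolding F_def using T
    by (intro continuous_on_compose2[OF cont]) auto
  have Fr: "continuous (at_right x) F" for x
    using Fc by (meson continuous_on_eq_continuous_within continuous_within_subset iso_tuple_UNIV_I subset_UNIV)
  have "(\<integral>\<^sup>+ u. indicator {a<..b} u \<partial>stieltjes T kr) \<le> (\<integral>\<^sup>+ u. indicator A u \<partial>stieltjes T kr)"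
    using sub by (intro nn_integral_mono) (auto simp: indicator_def)
  also have "\<dots> = 0" by (rule I)
  finally have "emeasure (stieltjes T kr) {a<..b} = 0"
    by (simp add: stieltjes_def)
  hence "ennreal (F b - F a) = 0"
    using emeasure_interval_measure_Ioc_eq[of F a b, OF Fm Fr] ab
    by (simp add: stieltjes_def F_def)
  hence "F b \<le> F a" by (simp add: ennreal_eq_0_iff)
  moreover have "F a \<le> F b" using Fm ab by auto
  ultimately show ?thesis using ab by (simp add: F_def)
qed

lemma one_side:
  assumes T: "0 < T" and c: "0 < c"
    and A1: "assumptionA T c C l1 r1" and A2: "assumptionA T c C l2 r2"
    and S1: "BSP_solution T l1 r1 s1 a1 x1 k1"
    and S2: "BSP_solution T l2 r2 s2 a2 x2 k2"
    and Lb: "\<forall>t\<in>{0..T}. \<forall>x. \<bar>l1 t x - l2 t x\<bar> \<le> Lb"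
    and Rb: "\<forall>t\<in>{0..T}. \<forall>x. \<bar>r1 t x - r2 t x\<bar> \<le> Rb"
    and P: "\<forall>t\<in>{0..T}. \<bar>(a1 + s1 T - s1 t) - (a2 + s2 T - s2 t)\<bar> \<le> P"
  shows "\<forall>t\<in>{0..T}. (k1 T - k1 t) - (k2 T - k2 t) \<le> P + max Lb Rb / c"
proof (rule ccontr)
  define m where "m = max Lb Rb"
  define M where "M = P + m / c"
  define D where "D = (\<lambda>t. (k1 T - k1 t) - (k2 T - k2 t))"
  assume "\<not> ?thesis"
  then obtain t0 where t0: "t0 \<in> {0..T}" and Dt0: "D t0 > M"
    by (auto simp: D_def M_def m_def not_le)
  have "0 \<le> P" using P T by (meson abs_ge_zero atLeastAtMost_iff less_le order_trans order_refl)
  moreover have "0 \<le> m" using Lb T unfolding m_def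
    by (metis abs_ge_zero atLeastAtMost_iff less_imp_le max.coboundedI1 order_refl order_trans)
  ultimately have M0: "0 \<le> M" using c by (simp add: M_def)
  from S1 obtain kr1 kl1 where x1: "\<forall>t\<in>{0..T}. x1 t = a1 + s1 T - s1 t + k1 T - k1 t"
    and k1c: "continuous_on {0..T} k1"
    and b1: "\<forall>t\<in>{0..T}. l1 t (x1 t) \<le> 0 \<and> 0 \<le> r1 t (x1 t)"
    and kr1: "kr1 \<in> Incr T" and kl1: "kl1 \<in> Incr T" and k1e: "\<forall>t\<in>{0..T}. k1 t = kr1 t - kl1 t"
    and Ir1: "(\<integral>\<^sup>+ u. indicator {u\<in>{0..T}. r1 u (x1 u) > 0} u \<partial>stieltjes T kr1) = 0"
    unfolding BSP_solution_def BV_def by auto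
  from S2 obtain kr2 kl2 where x2: "\<forall>t\<in>{0..T}. x2 t = a2 + s2 T - s2 t + k2 T - k2 t"
    and k2c: "continuous_on {0..T} k2"
    and b2: "\<forall>t\<in>{0..T}. l2 t (x2 t) \<le> 0 \<and> 0 \<le> r2 t (x2 t)"
    and kr2: "kr2 \<in> Incr T" and kl2: "kl2 \<in> Incr T" and k2e: "\<forall>t\<in>{0..T}. k2 t = kr2 t - kl2 t"
    and Il2: "(\<integral>\<^sup>+ u. indicator {u\<in>{0..T}. l2 u (x2 u) < 0} u \<partial>stieltjes T kl2) = 0"
    unfolding BSP_solution_def BV_def by auto
  have Dc: "continuous_on {0..T} D" unfolding D_def
    by (intro continuous_intros k1c k2c)
  define M' where "M' = (D t0 + M) / 2"
  have M'lt: "M < M'" "M' < D t0" using Dt0 by (auto simp: M'_def)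
  define S where "S = {t \<in> {t0..T}. D t \<le> M'}"
  have "T \<in> S" using t0 M0 M'lt by (auto simp: S_def D_def)
  have Scl: "closed S" unfolding S_def
    by (intro continuous_on_closed_Collect_le continuous_on_subset[OF Dc] continuous_intros)
       (use t0 in auto)
  define t1 where "t1 = Inf S"
  have t1S: "t1 \<in> S" unfolding t1_def
    by (rule closed_contains_Inf) (use \<open>T \<in> S\<close> Scl in \<open>auto simp: S_def bdd_below_def\<close>)
  hence t1: "t0 \<le> t1" "t1 \<le> T" "D t1 \<le> M'" by (auto simp: S_def)
  have above: "D t > M'" if "t0 \<le> t" "t < t1" for t
  proof (rule ccontr)
    assume "\<not> ?thesis"
    hence "t \<in> S" using that t1 by (auto simp: S_def)
    hence "t1 \<le> t" unfolding t1_def by (rule cInf_lower) (auto simp: S_def bdd_below_def)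
    thus False using that by auto
  qed
  have gap: "x1 t - x2 t > m / c" if "t0 \<le> t" "t < t1" for t
  proof -
    have tT: "t \<in> {0..T}" using that t0 t1 by auto
    have "x1 t - x2 t = ((a1 + s1 T - s1 t) - (a2 + s2 T - s2 t)) + D t"
      using x1 x2 tT by (simp add: D_def)
    moreover have "(a1 + s1 T - s1 t) - (a2 + s2 T - s2 t) \<ge> - P" using P tT by force
    ultimately show ?thesis using above[OF that] M'lt by (simp add: M_def)
  qed
  have r1pos: "r1 t (x1 t) > 0" and l2neg: "l2 t (x2 t) < 0" if "t0 \<le> t" "t < t1" for t
  proof -
    have tT: "t \<in> {0..T}" using that t0 t1 by auto
    have g: "c * (x1 t - x2 t) > m" using gap[OF that] c by (simp add: field_simps)
    have "0 \<le> m / c" using \<open>0 \<le> m\<close> c by simp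
    hence lt: "x2 t < x1 t" using gap[OF that] by linarith
    from A2 tT have sm2: "strict_mono (r2 t)"
      and cr2: "c * \<bar>x1 t - x2 t\<bar> \<le> \<bar>r2 t (x1 t) - r2 t (x2 t)\<bar>"
      unfolding assumptionA_def by meson+
    from A1 tT have sm1: "strict_mono (l1 t)"
      and cl1: "c * \<bar>x1 t - x2 t\<bar> \<le> \<bar>l1 t (x1 t) - l1 t (x2 t)\<bar>"
      unfolding assumptionA_def by meson+
    have "r2 t (x2 t) < r2 t (x1 t)" using sm2 lt by (simp add: strict_mono_less)
    hence "r2 t (x1 t) - r2 t (x2 t) \<ge> c * (x1 t - x2 t)" using cr2 lt by simp
    moreover have "\<bar>r1 t (x1 t) - r2 t (x1 t)\<bar> \<le> m" unfolding m_def using Rb tT by (meson max.coboundedI2 order_trans)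
    moreover have "0 \<le> r2 t (x2 t)" using b2 tT by auto
    ultimately show "r1 t (x1 t) > 0" using g by linarith
    have "l1 t (x2 t) < l1 t (x1 t)" using sm1 lt by (simp add: strict_mono_less)
    hence "l1 t (x1 t) - l1 t (x2 t) \<ge> c * (x1 t - x2 t)" using cl1 lt by simp
    moreover have "\<bar>l1 t (x2 t) - l2 t (x2 t)\<bar> \<le> m" unfolding m_def using Lb tT by (meson max.coboundedI1 order_trans)
    moreover have "l1 t (x1 t) \<le> 0" using b1 tT by auto
    ultimately show "l2 t (x2 t) < 0" using g by linarith
  qed
  have Dge: "D t \<ge> D t0" if "t \<in> {t0<..<t1}" for t
  proof -
    have tT: "t \<in> {0..T}" and t0T: "t0 \<in> {0..T}" using that t0 t1 by auto
    have "kr1 t = kr1 t0"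
      by (rule stieltjes_flat[OF _ kr1 Ir1]) (use that t0 t1 r1pos in auto)
    moreover have "kl2 t = kl2 t0"
      by (rule stieltjes_flat[OF _ kl2 Il2]) (use that t0 t1 l2neg in auto)
    moreover have "kl1 t0 \<le> kl1 t" using kl1 tT t0T that
      by (auto simp: Incr_def intro: mono_onD)
    moreover have "kr2 t0 \<le> kr2 t" using kr2 tT t0T that
      by (auto simp: Incr_def intro: mono_onD)
    ultimately show ?thesis using k1e k2e tT t0T by (simp add: D_def)
  qed
  have "t0 < t1" using t1 M'lt by (cases "t0 = t1") auto
  have "D t1 \<ge> D t0"
    by (rule continuous_ge_on_closure[where S="{t0<..<t1}"])
       (use \<open>t0 < t1\<close> t0 t1 Dge in \<open>auto intro: continuous_on_subset[OF Dc]\<close>)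
  thus False using t1 M'lt by auto
qed


theorem mainTheorem2:
  fixes T c C a1 a2 :: real
    and l1 r1 l2 r2 :: "real \<Rightarrow> real \<Rightarrow> real"
    and s1 s2 x1 x2 k1 k2 :: "real \<Rightarrow> real"
  assumes "0 < T" and "0 < c" and "c < C"
    and "assumptionA T c C l1 r1" and "assumptionA T c C l2 r2"
    and "continuous_on {0..T} s1" and "continuous_on {0..T} s2"
    and "l1 T a1 \<le> 0" and "0 \<le> r1 T a1"
    and "l2 T a2 \<le> 0" and "0 \<le> r2 T a2"
    and "BSP_solution T l1 r1 s1 a1 x1 k1"
    and "BSP_solution T l2 r2 s2 a2 x2 k2"
  shows "\<forall>Lbar Rbar.
           (\<forall>t\<in>{0..T}. \<forall>x. \<bar>l1 t x - l2 t x\<bar> \<le> Lbar) \<longrightarrow>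
           (\<forall>t\<in>{0..T}. \<forall>x. \<bar>r1 t x - r2 t x\<bar> \<le> Rbar) \<longrightarrow>
           (SUP t\<in>{0..T}. \<bar>k1 t - k2 t\<bar>)
             \<le> 2 * C / c * \<bar>a1 - a2\<bar> + 4 * C / c * (SUP t\<in>{0..T}. \<bar>s1 t - s2 t\<bar>)
               + 2 / c * max Lbar Rbar"
proof (intro allI impI)
  fix Lb Rb
  assume Lb: "\<forall>t\<in>{0..T}. \<forall>x. \<bar>l1 t x - l2 t x\<bar> \<le> Lb"
    and Rb: "\<forall>t\<in>{0..T}. \<forall>x. \<bar>r1 t x - r2 t x\<bar> \<le> Rb"
  have Lb': "\<forall>t\<in>{0..T}. \<forall>x. \<bar>l2 t x - l1 t x\<bar> \<le> Lb" using Lb by (simp add: abs_minus_commute)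
  have Rb': "\<forall>t\<in>{0..T}. \<forall>x. \<bar>r2 t x - r1 t x\<bar> \<le> Rb" using Rb by (simp add: abs_minus_commute)
  define S where "S = (SUP t\<in>{0..T}. \<bar>s1 t - s2 t\<bar>)"
  have "continuous_on {0..T} (\<lambda>t. \<bar>s1 t - s2 t\<bar>)"
    using assms(6,7) by (intro continuous_intros)
  hence "compact ((\<lambda>t. \<bar>s1 t - s2 t\<bar>) ` {0..T})"
    by (intro compact_continuous_image) auto
  hence bdd: "bdd_above ((\<lambda>t. \<bar>s1 t - s2 t\<bar>) ` {0..T})"
    by (intro bounded_imp_bdd_above compact_imp_bounded)
  have hS: "\<bar>s1 t - s2 t\<bar> \<le> S" if "t \<in> {0..T}" for t
    unfolding S_def using bdd that by (rule cSUP_upper2) auto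
  have S0: "0 \<le> S" using hS[of 0] assms(1) by (meson abs_ge_zero atLeastAtMost_iff less_imp_le order_refl order_trans)
  define P where "P = \<bar>a1 - a2\<bar> + 2 * S"
  have P1: "\<forall>t\<in>{0..T}. \<bar>(a1 + s1 T - s1 t) - (a2 + s2 T - s2 t)\<bar> \<le> P"
  proof
    fix t assume t: "t \<in> {0..T}"
    have "\<bar>s1 T - s2 T\<bar> \<le> S" using hS assms(1) by auto
    moreover have "\<bar>s1 t - s2 t\<bar> \<le> S" using hS t by auto
    ultimately show "\<bar>(a1 + s1 T - s1 t) - (a2 + s2 T - s2 t)\<bar> \<le> P"
      unfolding P_def by (smt (verit))
  qed
  have P2: "\<forall>t\<in>{0..T}. \<bar>(a2 + s2 T - s2 t) - (a1 + s1 T - s1 t)\<bar> \<le> P"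
    using P1 by (simp add: abs_minus_commute)
  define B where "B = P + max Lb Rb / c"
  have D1: "\<forall>t\<in>{0..T}. (k1 T - k1 t) - (k2 T - k2 t) \<le> B"
    unfolding B_def by (rule one_side[OF assms(1,2,4,5,12,13) Lb Rb P1])
  have D2: "\<forall>t\<in>{0..T}. (k2 T - k2 t) - (k1 T - k1 t) \<le> B"
    unfolding B_def by (rule one_side[OF assms(1,2,5,4,13,12) Lb' Rb' P2])
  have k0: "k1 0 = 0" "k2 0 = 0" using assms(12,13) by (auto simp: BSP_solution_def BV_def)
  have "0 \<in> {0..T}" using assms(1) by auto
  have kb: "\<bar>k1 t - k2 t\<bar> \<le> 2 * B" if "t \<in> {0..T}" for t
    using D1 D2 that \<open>0 \<in> {0..T}\<close> k0
    by (smt (verit, best))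
  have m0: "0 \<le> max Lb Rb" using Lb \<open>0 \<in> {0..T}\<close>
    by (metis abs_ge_zero max.coboundedI1 order_trans)
  have Cc: "1 \<le> C / c" using assms(2,3) by simp
  have "2 * B = 2 * \<bar>a1 - a2\<bar> + 4 * S + 2 / c * max Lb Rb"
    by (simp add: B_def P_def)
  also have "\<dots> \<le> 2 * C / c * \<bar>a1 - a2\<bar> + 4 * C / c * S + 2 / c * max Lb Rb"
  proof -
    have "2 * \<bar>a1 - a2\<bar> \<le> 2 * (C / c) * \<bar>a1 - a2\<bar>"
      using Cc by (intro mult_right_mono) auto
    moreover have "4 * S \<le> 4 * (C / c) * S"
      using Cc S0 by (intro mult_right_mono) auto
    ultimately show ?thesis by simp
  qed
  finally have "2 * B \<le> 2 * C / c * \<bar>a1 - a2\<bar> + 4 * C / c * S + 2 / c * max Lb Rb" .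
  thus "(SUP t\<in>{0..T}. \<bar>k1 t - k2 t\<bar>)
             \<le> 2 * C / c * \<bar>a1 - a2\<bar> + 4 * C / c * (SUP t\<in>{0..T}. \<bar>s1 t - s2 t\<bar>)
               + 2 / c * max Lb Rb"
    unfolding S_def[symmetric]
    using kb \<open>0 \<in> {0..T}\<close> by (intro cSUP_least) force+
qed

end
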